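(* Let $1\le r\le D$, $Y\in\mathbb{Z}$, and $1\le d<D$. Let $c_{1:d}$ be such that $P_\theta(\mathbf{C}_{1:d}=c_{1:d},Z^{(r,D)}=Y)>0$, and let $N^{<}_d,N^{=}_d,N^{>}_d$ be the numbers of $t\le d$ with $c_t={<}Y$, ${=}Y$, ${>}Y$ respectively. Suppose one of the following three conditions holds: (1) $N^{=}_d\ge1$ and $N^{<}_d=r-1$; (2) $N^{=}_d\ge1$ and $N^{>}_d=D-r$; (3) $N^{=}_d=\max\big(r-N^{<}_d,\;D-r-N^{>}_d+1\big)$. Then, conditionally on $\mathbf{C}_{1:d}=c_{1:d}$ and $Z^{(r,D)}=Y$, the variables $Z_1,\dots,Z_D$ are mutually independent. For $t\le d$, $Z_t\sim\operatorname{trunc}_{\mathbb{Z}_{c_t}}f_\theta$. The variables $Z_{d+1},\dots,Z_D$ are i.i.d. with law: - $\operatorname{trunc}_{[Y,\infty)}f_\theta$ under condition (1); - $\operatorname{trunc}_{(-\infty,Y]}f_\theta$ under condition (2); - $f_\theta$ under condition (3). In particular, $Z_{d+1},\dots,Z_D$ do not depend on $Z^{(r,D)}$ beyond $\mathbf{C}_{1:d}$.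
   Context: Let $f_\theta$ be a probability mass function on $\mathbb{Z}$. Let $Z_1,\dots,Z_D\overset{iid}{\sim}f_\theta$, and let $Z^{(r,D)}$ be the $r$-th smallest of them. For each $t$, $C_t\in\{{<}Y,{=}Y,{>}Y\}$ records whether $Z_t<Y$, $Z_t=Y$ or $Z_t>Y$. Set $\mathbb{Z}_{<Y}=\{\dots,Y-1\}$, $\mathbb{Z}_{=Y}=\{Y\}$ and $\mathbb{Z}_{>Y}=\{Y+1,\dots\}$. For $S\subseteq\mathbb{Z}$, $\operatorname{trunc}_S f$ denotes $f$ restricted to $S\cap\operatorname{supp}(f)$ and renormalized. *)

theory Defs
  imports "HOL-Probability.Probability"
begin

datatype cmp = LtY | EqY | GtY

definition cmp_of :: "int \<Rightarrow> int \<Rightarrow> cmp" where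
  "cmp_of Y z = (if z < Y then LtY else if z = Y then EqY else GtY)"

definition cmp_set :: "int \<Rightarrow> cmp \<Rightarrow> int set" where
  "cmp_set Y c = (case c of LtY \<Rightarrow> {..<Y} | EqY \<Rightarrow> {Y} | GtY \<Rightarrow> {Y<..})"

definition trunc_pmf :: "int set \<Rightarrow> int pmf \<Rightarrow> int pmf" where
  "trunc_pmf S f = cond_pmf f S"

text \<open>Joint law of Z_1,...,Z_D iid f, as a random function on indices 1..D
  (value 0 outside {1..D}).\<close>
definition iid_pmf :: "nat \<Rightarrow> int pmf \<Rightarrow> (nat \<Rightarrow> int) pmf" where
  "iid_pmf D f = Pi_pmf {1..D} 0 (\<lambda>_. f)"

definition order_stat :: "nat \<Rightarrow> nat \<Rightarrow> (nat \<Rightarrow> int) \<Rightarrow> int" where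
  "order_stat r D z = sort (map z [1..<D+1]) ! (r - 1)"

definition cond_event :: "nat \<Rightarrow> nat \<Rightarrow> int \<Rightarrow> nat \<Rightarrow> (nat \<Rightarrow> cmp) \<Rightarrow> (nat \<Rightarrow> int) set" where
  "cond_event r D Y d c =
     {z. (\<forall>t\<in>{1..d}. cmp_of Y (z t) = c t) \<and> order_stat r D z = Y}"

definition count_cmp :: "nat \<Rightarrow> (nat \<Rightarrow> cmp) \<Rightarrow> cmp \<Rightarrow> nat" where
  "count_cmp d c k = card {t\<in>{1..d}. c t = k}"

end

theory Submission imports Defs begin

lemma cond_Pi_pmf:
  assumes fin: "finite I" and ne: "\<And>t. t \<in> I \<Longrightarrow> set_pmf (p t) \<inter> A t \<noteq> {}"
  shows "cond_pmf (Pi_pmf I dflt p) (Pi I A) = Pi_pmf I dflt (\<lambda>t. cond_pmf (p t) (A t))"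
proof -
  have mpos: "measure_pmf.prob (p t) (A t) > 0" if "t \<in> I" for t
    using ne[OF that] by (auto intro: measure_pmf_posI)
  have "\<forall>t\<in>I. \<exists>y. y \<in> set_pmf (p t) \<inter> A t" using ne by blast
  then obtain g where g: "\<And>t. t \<in> I \<Longrightarrow> g t \<in> set_pmf (p t) \<inter> A t" by metis
  define h where "h = (\<lambda>t. if t \<in> I then g t else dflt)"
  have "h \<in> set_pmf (Pi_pmf I dflt p)" using g fin by (auto simp: h_def set_Pi_pmf PiE_dflt_def)
  moreover have "h \<in> Pi I A" using g by (auto simp: h_def)
  ultimately have ne2: "set_pmf (Pi_pmf I dflt p) \<inter> Pi I A \<noteq> {}" by blast
  show ?thesis
  proof (rule pmf_eqI)
    fix x
    show "pmf (cond_pmf (Pi_pmf I dflt p) (Pi I A)) x = pmf (Pi_pmf I dflt (\<lambda>t. cond_pmf (p t) (A t))) x"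
    proof (cases "x \<in> Pi I A")
      case True
      then have "(\<Prod>t\<in>I. if x t \<in> A t then pmf (p t) (x t) / measure_pmf.prob (p t) (A t) else 0)
          = (\<Prod>t\<in>I. pmf (p t) (x t) / measure_pmf.prob (p t) (A t))"
        by (intro prod.cong) auto
      also have "\<dots> = (\<Prod>t\<in>I. pmf (p t) (x t)) / (\<Prod>t\<in>I. measure_pmf.prob (p t) (A t))"
        by (rule prod_dividef)
      finally show ?thesis using True
        by (auto simp add: pmf_cond[OF ne2] pmf_cond[OF ne] pmf_Pi[OF fin] measure_Pi_pmf_Pi[OF fin])
    next
      case False
      then obtain t where t: "t \<in> I" "x t \<notin> A t" by auto
      then have "(\<Prod>t\<in>I. if x t \<in> A t then pmf (p t) (x t) / measure_pmf.prob (p t) (A t) else 0) = 0"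
        using fin by (intro prod_zero) auto
      then show ?thesis using False
        by (simp add: pmf_cond[OF ne2] pmf_cond[OF ne] pmf_Pi[OF fin])
    qed
  qed
qed

lemma sorted_nth_down:
  assumes "sorted s" "k < length s" "\<And>x y. P y \<Longrightarrow> x \<le> y \<Longrightarrow> P x"
  shows "P (s ! k) \<longleftrightarrow> k < length (filter P s)"
  using assms(1,2)
proof (induction s arbitrary: k)
  case Nil then show ?case by simp
next
  case (Cons x s)
  have allx: "\<forall>y\<in>set s. x \<le> y" using Cons.prems(1) by simp
  show ?case
  proof (cases k)
    case 0
    show ?thesis
    proof (cases "P x")
      case True then show ?thesis using 0 by simp
    next
      case False
      then have "filter P s = []" using allx assms(3) by (auto simp: filter_empty_conv)
      then show ?thesis using 0 False by simp
    qed
  next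
    case (Suc k')
    have k': "k' < length s" using Cons.prems Suc by simp
    have IH: "P (s ! k') \<longleftrightarrow> k' < length (filter P s)" using Cons.IH Cons.prems k' by simp
    show ?thesis
    proof (cases "P x")
      case True then show ?thesis using Suc IH by simp
    next
      case False
      then have "filter P s = []" using allx assms(3) by (auto simp: filter_empty_conv)
      moreover have "\<not> P (s ! k')" using False allx assms(3) k' by (meson nth_mem)
      ultimately show ?thesis using Suc False by simp
    qed
  qed
qed

lemma length_filter_map_upt:
  "length (filter P (map z [1..<D+1])) = card {t\<in>{1..D}. P (z t)}"
proof -
  have "length (filter P (map z [1..<D+1])) = length (filter (\<lambda>t. P (z t)) [1..<D+1])"
    by (simp add: filter_map comp_def)
  also have "\<dots> = card (set (filter (\<lambda>t. P (z t)) [1..<D+1]))"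
    by (rule distinct_card[symmetric]) simp
  also have "set (filter (\<lambda>t. P (z t)) [1..<D+1]) = {t\<in>{1..D}. P (z t)}" by auto
  finally show ?thesis .
qed

lemma order_stat_char:
  assumes "1 \<le> r" "r \<le> D"
  shows "order_stat r D z = Y \<longleftrightarrow>
    card {t\<in>{1..D}. z t < Y} \<le> r - 1 \<and> r \<le> card {t\<in>{1..D}. z t \<le> Y}"
proof -
  define s where "s = sort (map z [1..<D+1])"
  have ss: "sorted s" and ls: "r - 1 < length s" using assms by (auto simp: s_def)
  have A: "s ! (r-1) < Y \<longleftrightarrow> r - 1 < length (filter (\<lambda>x. x < Y) s)"
    by (rule sorted_nth_down[OF ss ls]) auto
  have B: "s ! (r-1) \<le> Y \<longleftrightarrow> r - 1 < length (filter (\<lambda>x. x \<le> Y) s)"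
    by (rule sorted_nth_down[OF ss ls]) auto
  have fl: "length (filter P s) = card {t\<in>{1..D}. P (z t)}" for P
    unfolding s_def filter_sort length_sort length_filter_map_upt ..
  have "order_stat r D z = Y \<longleftrightarrow> \<not> s ! (r-1) < Y \<and> s ! (r-1) \<le> Y"
    by (auto simp: order_stat_def s_def)
  also have "\<dots> \<longleftrightarrow> card {t\<in>{1..D}. z t < Y} \<le> r - 1 \<and> r \<le> card {t\<in>{1..D}. z t \<le> Y}"
  proof -
    have 1: "\<not> s ! (r-1) < Y \<longleftrightarrow> card {t\<in>{1..D}. z t < Y} \<le> r - 1"
      using A fl[of "\<lambda>x. x < Y"] by auto
    have 2: "s ! (r-1) \<le> Y \<longleftrightarrow> r \<le> card {t\<in>{1..D}. z t \<le> Y}"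
      using B fl[of "\<lambda>x. x \<le> Y"] assms by auto
    show ?thesis using 1 2 by blast
  qed
  finally show ?thesis .
qed

lemma card_split:
  fixes d D :: nat
  assumes "d \<le> D"
  shows "card {t\<in>{1..D}. Q t} = card {t\<in>{1..d}. Q t} + card {t\<in>{d<..D}. Q t}"
proof -
  have "{t\<in>{1..D}. Q t} = {t\<in>{1..d}. Q t} \<union> {t\<in>{d<..D}. Q t}"
    using assms by (auto simp: not_less)
  then show ?thesis by (simp add: card_Un_disjoint[symmetric] disjoint_iff) 
qed

lemma cmp_of_iff: "cmp_of Y x = k \<longleftrightarrow> x \<in> cmp_set Y k"
  by (cases k) (auto simp: cmp_of_def cmp_set_def)


lemma final_step:
  assumes E: "cond_event r D Y d c = Pi {1..D} A"
    and pos: "measure_pmf.prob (iid_pmf D f) (cond_event r D Y d c) > 0"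
  shows "cond_pmf (iid_pmf D f) (cond_event r D Y d c) = Pi_pmf {1..D} 0 (\<lambda>t. cond_pmf f (A t))"
proof -
  have "cond_event r D Y d c \<inter> set_pmf (iid_pmf D f) \<noteq> {}"
  proof
    assume "cond_event r D Y d c \<inter> set_pmf (iid_pmf D f) = {}"
    then have "measure_pmf.prob (iid_pmf D f) (cond_event r D Y d c) = 0"
      by (metis measure_Int_set_pmf measure_empty)
    then show False using pos by simp
  qed
  then obtain z where z: "z \<in> Pi {1..D} A" "z \<in> set_pmf (Pi_pmf {1..D} 0 (\<lambda>_. f))"
    using E unfolding iid_pmf_def by blast
  have ne: "set_pmf f \<inter> A t \<noteq> {}" if "t \<in> {1..D}" for t
  proof -
    have "z t \<in> A t" using z(1) that by auto
    moreover have "z t \<in> set_pmf f" using z(2) that by (auto simp: set_Pi_pmf PiE_dflt_def)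
    ultimately show ?thesis by blast
  qed
  show ?thesis unfolding E iid_pmf_def
    by (rule cond_Pi_pmf[OF _ ne]) auto
qed

lemma cond_pmf_UNIV: "cond_pmf f UNIV = f"
proof -
  have ne: "set_pmf f \<inter> UNIV \<noteq> {}" by (simp add: set_pmf_not_empty)
  show ?thesis by (rule pmf_eqI) (simp add: pmf_cond[OF ne])
qed

lemma trunc_UNIV: "trunc_pmf UNIV f = f"
  unfolding trunc_pmf_def by (rule cond_pmf_UNIV)

theorem theorem5p3:
  fixes f :: "int pmf" and r D d :: nat and Y :: int and c :: "nat \<Rightarrow> cmp"
  assumes "1 \<le> r" and "r \<le> D" and "1 \<le> d" and "d < D"
    and pos: "measure_pmf.prob (iid_pmf D f) (cond_event r D Y d c) > 0"
  defines "Nlt \<equiv> count_cmp d c LtY" and "Neq \<equiv> count_cmp d c EqY"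
    and "Ngt \<equiv> count_cmp d c GtY"
  shows
    "(Neq \<ge> 1 \<and> Nlt = r - 1 \<longrightarrow>
        cond_pmf (iid_pmf D f) (cond_event r D Y d c) =
        Pi_pmf {1..D} 0 (\<lambda>t. if t \<le> d then trunc_pmf (cmp_set Y (c t)) f
                               else trunc_pmf {Y..} f))
   \<and> (Neq \<ge> 1 \<and> Ngt = D - r \<longrightarrow>
        cond_pmf (iid_pmf D f) (cond_event r D Y d c) =
        Pi_pmf {1..D} 0 (\<lambda>t. if t \<le> d then trunc_pmf (cmp_set Y (c t)) f
                               else trunc_pmf {..Y} f))
   \<and> (int Neq = max (int r - int Nlt) (int D - int r - int Ngt + 1) \<longrightarrow>
        cond_pmf (iid_pmf D f) (cond_event r D Y d c) =
        Pi_pmf {1..D} 0 (\<lambda>t. if t \<le> d then trunc_pmf (cmp_set Y (c t)) f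
                               else f))"
proof -
  define C where "C z \<longleftrightarrow> (\<forall>t\<in>{1..d}. cmp_of Y (z t) = c t)" for z :: "nat \<Rightarrow> int"
  define rL where "rL z = card {t\<in>{d<..D}. z t < Y}" for z :: "nat \<Rightarrow> int"
  define rLe where "rLe z = card {t\<in>{d<..D}. z t \<le> Y}" for z :: "nat \<Rightarrow> int"
  define rG where "rG z = card {t\<in>{d<..D}. z t > Y}" for z :: "nat \<Rightarrow> int"
  have dD: "d \<le> D" using assms by simp
  have pt: "(z t < Y \<longleftrightarrow> c t = LtY) \<and> (z t \<le> Y \<longleftrightarrow> c t = LtY \<or> c t = EqY)"
    if "C z" "t \<in> {1..d}" for z t
  proof -
    have "cmp_of Y (z t) = c t" using that by (auto simp: C_def)
    then show ?thesis by (cases "z t < Y"; cases "z t = Y"; auto simp: cmp_of_def)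
  qed
  have cntL: "card {t\<in>{1..d}. z t < Y} = Nlt" if "C z" for z
  proof -
    have "{t\<in>{1..d}. z t < Y} = {t\<in>{1..d}. c t = LtY}"
      using pt[OF that] by auto
    then show ?thesis by (simp add: Nlt_def count_cmp_def)
  qed
  have cntLe: "card {t\<in>{1..d}. z t \<le> Y} = Nlt + Neq" if "C z" for z
  proof -
    have "{t\<in>{1..d}. z t \<le> Y} = {t\<in>{1..d}. c t = LtY} \<union> {t\<in>{1..d}. c t = EqY}"
      using pt[OF that] by auto
    then show ?thesis by (simp add: Nlt_def Neq_def count_cmp_def card_Un_disjoint disjoint_iff)
  qed
  have dsum: "Nlt + Neq + Ngt = d"
  proof -
    have eq: "{1..d} = {t\<in>{1..d}. c t = LtY} \<union> {t\<in>{1..d}. c t = EqY} \<union> {t\<in>{1..d}. c t = GtY}"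
    proof (rule set_eqI)
      fix t
      show "t \<in> {1..d} \<longleftrightarrow> t \<in> {t\<in>{1..d}. c t = LtY} \<union> {t\<in>{1..d}. c t = EqY} \<union> {t\<in>{1..d}. c t = GtY}"
        by (cases "c t") auto
    qed
    have "card ({t\<in>{1..d}. c t = LtY} \<union> {t\<in>{1..d}. c t = EqY} \<union> {t\<in>{1..d}. c t = GtY}) = Nlt + Neq + Ngt"
      unfolding Nlt_def Neq_def Ngt_def count_cmp_def
    proof -
      let ?A = "{t\<in>{1..d}. c t = LtY}" and ?B = "{t\<in>{1..d}. c t = EqY}" and ?C = "{t\<in>{1..d}. c t = GtY}"
      have "card (?A \<union> ?B \<union> ?C) = card (?A \<union> ?B) + card ?C"
        by (rule card_Un_disjoint) auto
      moreover have "card (?A \<union> ?B) = card ?A + card ?B"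
        by (rule card_Un_disjoint) auto
      ultimately show "card (?A \<union> ?B \<union> ?C) = card ?A + card ?B + card ?C" by simp
    qed
    then show ?thesis by (simp only: eq[symmetric] card_atLeastAtMost)
  qed
  have Echar: "z \<in> cond_event r D Y d c \<longleftrightarrow> C z \<and> Nlt + rL z \<le> r - 1 \<and> r \<le> Nlt + Neq + rLe z" for z
  proof -
    have "z \<in> cond_event r D Y d c \<longleftrightarrow> C z \<and> card {t\<in>{1..D}. z t < Y} \<le> r - 1 \<and> r \<le> card {t\<in>{1..D}. z t \<le> Y}"
      using order_stat_char[OF assms(1,2)] by (simp add: cond_event_def C_def)
    then show ?thesis
      using card_split[OF dD, of "\<lambda>t. z t < Y"] card_split[OF dD, of "\<lambda>t. z t \<le> Y"] cntL cntLe
        by (auto simp: rL_def rLe_def)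
  qed
  have rLrLe: "rL z \<le> rLe z" for z unfolding rL_def rLe_def by (rule card_mono) auto
  have rLeG: "rLe z + rG z = D - d" for z
  proof -
    have eq: "{d<..D} = {t\<in>{d<..D}. z t \<le> Y} \<union> {t\<in>{d<..D}. z t > Y}" by auto
    have "card ({t\<in>{d<..D}. z t \<le> Y} \<union> {t\<in>{d<..D}. z t > Y}) = rLe z + rG z"
      unfolding rLe_def rG_def by (rule card_Un_disjoint) auto
    then show ?thesis by (simp only: eq[symmetric] card_greaterThanAtMost)
  qed
  have rL0: "rL z = 0 \<longleftrightarrow> (\<forall>t\<in>{d<..D}. z t \<in> {Y..})" for z
    by (auto simp: rL_def) (meson greaterThanAtMost_iff leD)
  have rG0: "rG z = 0 \<longleftrightarrow> (\<forall>t\<in>{d<..D}. z t \<in> {..Y})" for z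
    by (auto simp: rG_def) (meson greaterThanAtMost_iff leD)
  have PiC: "z \<in> Pi {1..D} (\<lambda>t. if t \<le> d then cmp_set Y (c t) else B) \<longleftrightarrow> C z \<and> (\<forall>t\<in>{d<..D}. z t \<in> B)"
    for z B using dD by (auto simp: C_def cmp_of_iff Pi_def)
  have fin: "cond_pmf (iid_pmf D f) (cond_event r D Y d c) =
        Pi_pmf {1..D} 0 (\<lambda>t. if t \<le> d then trunc_pmf (cmp_set Y (c t)) f else trunc_pmf B f)"
    if "cond_event r D Y d c = Pi {1..D} (\<lambda>t. if t \<le> d then cmp_set Y (c t) else B)" for B
    unfolding final_step[OF that pos] trunc_pmf_def
    by (rule Pi_pmf_cong) auto
  show ?thesis
  proof (intro conjI impI)
    assume h: "Neq \<ge> 1 \<and> Nlt = r - 1"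
    show "cond_pmf (iid_pmf D f) (cond_event r D Y d c) =
        Pi_pmf {1..D} 0 (\<lambda>t. if t \<le> d then trunc_pmf (cmp_set Y (c t)) f else trunc_pmf {Y..} f)"
    proof (rule fin, rule set_eqI)
      fix z
      show "z \<in> cond_event r D Y d c \<longleftrightarrow> z \<in> Pi {1..D} (\<lambda>t. if t \<le> d then cmp_set Y (c t) else {Y..})"
      proof -
        have a: "Nlt + rL z \<le> r - 1 \<longleftrightarrow> rL z = 0" using h by linarith
        have b: "r \<le> Nlt + Neq + rLe z" using h assms(1) by linarith
        show ?thesis unfolding PiC Echar rL0[symmetric] using a b by blast
      qed
    qed
  next
    assume h: "Neq \<ge> 1 \<and> Ngt = D - r"
    show "cond_pmf (iid_pmf D f) (cond_event r D Y d c) =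
        Pi_pmf {1..D} 0 (\<lambda>t. if t \<le> d then trunc_pmf (cmp_set Y (c t)) f else trunc_pmf {..Y} f)"
    proof (rule fin, rule set_eqI)
      fix z
      show "z \<in> cond_event r D Y d c \<longleftrightarrow> z \<in> Pi {1..D} (\<lambda>t. if t \<le> d then cmp_set Y (c t) else {..Y})"
      proof -
        have e1: "rLe z + rG z + d = D" using rLeG[of z] dD by linarith
        have e2: "Ngt + r = D" using h assms(2) by linarith
        have a: "Nlt + rL z \<le> r - 1" using h e1 e2 dsum rLrLe[of z] assms(1) by linarith
        have b: "r \<le> Nlt + Neq + rLe z \<longleftrightarrow> rG z = 0" using e1 e2 dsum by linarith
        show ?thesis unfolding PiC Echar rG0[symmetric] using a b by blast
      qed
    qed
  next
    assume h: "int Neq = max (int r - int Nlt) (int D - int r - int Ngt + 1)"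
    have e: "cond_event r D Y d c = Pi {1..D} (\<lambda>t. if t \<le> d then cmp_set Y (c t) else UNIV)"
    proof (rule set_eqI)
      fix z
      show "z \<in> cond_event r D Y d c \<longleftrightarrow> z \<in> Pi {1..D} (\<lambda>t. if t \<le> d then cmp_set Y (c t) else UNIV)"
      proof -
        have e1: "rLe z + rG z + d = D" using rLeG[of z] dD by linarith
        have h1: "int Neq \<ge> int D - int r - int Ngt + 1" "int Neq \<ge> int r - int Nlt" using h by auto
        have dsum': "int Nlt + int Neq + int Ngt = int d" using dsum by linarith
        have a: "Nlt + rL z \<le> r - 1" using h1 e1 dsum' rLrLe[of z] assms(1) by linarith
        have b: "r \<le> Nlt + Neq + rLe z" using h1 by linarith
        show ?thesis unfolding PiC Echar using a b by blast
      qed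
    qed
    show "cond_pmf (iid_pmf D f) (cond_event r D Y d c) =
        Pi_pmf {1..D} 0 (\<lambda>t. if t \<le> d then trunc_pmf (cmp_set Y (c t)) f else f)"
      using fin[OF e] by (simp only: trunc_UNIV)
  qed
qed

end
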